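(* Let $x,y\in\mathbb{C}$ with $x^N+y^N=1$, and assume no denominators below vanish. Suppose the branches in the definition of $w$ are fixed so that, for all $n\in\mathbb{Z}$, $$w(x,y|n)=w(\omega^nx,y|0)\quad\text{and}\quad w(y,x|n)=w(\omega^ny,x|0),$$ and so that the chosen values of $(x/y)^{(N-1)/2}$ and $(y/x)^{(N-1)/2}$ are reciprocal, with squares $(x/y)^{N-1}$ and $(y/x)^{N-1}$ respectively. Then for every integer $n$, $$\sum_{k=0}^{N-1}w(x,y|k)\,\omega^{nk}=N\,\frac{(x/y)^{(N-1)/2}}{\lambda(y,x)}\,\frac{1}{w(y,x|n-1)}.$$
   Context: Let $N\ge2$ and $\omega=e^{2\pi i/N}$. For $x,y\in\mathbb{C}$ with $x^N+y^N=1$, define $$w(x,y|0)=y^{\frac{1-N}{2}}\prod_{j=1}^{N-1}(1-\omega^{-j}x)^{j/N}$$ for fixed choices of the fractional powers, and $$w(x,y|n)=w(x,y|0)\prod_{j=1}^{n}\frac{y}{1-\omega^jx}\quad (n\ge0),$$ extended $N$-periodically in $n$ (this function is $N$-periodic in $n$). Define $$\lambda(x,y)=\frac{(x/y)^{(N-1)/2}}{w(x,y|0)}\sum_{k=0}^{N-1}\frac{1}{w(y,x|k)},$$ and define $\lambda(y,x)$ by the same formula with $x$ and $y$ interchanged. *)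

theory Defs
  imports Complex_Main
begin

definition omega :: "nat \<Rightarrow> complex" where
  "omega N = cis (2 * pi / real N)"

text \<open>W a b is a legitimate value of w(a,b|0) = b^((1-N)/2) * prod_{j=1}^{N-1} (1 - omega^(-j) a)^(j/N)
  for SOME choice of the fractional powers: c is a square root of b^(1-N), and d j is an
  N-th root of (1 - omega^(-j) a)^j.\<close>
definition is_w0 :: "nat \<Rightarrow> (complex \<Rightarrow> complex \<Rightarrow> complex) \<Rightarrow> complex \<Rightarrow> complex \<Rightarrow> bool" where
  "is_w0 N W a b \<longleftrightarrow>
     (\<exists>c d. c ^ 2 = b powi (1 - int N) \<and>
            (\<forall>j\<in>{1..N-1}. (d j) ^ N = (1 - omega N powi (- int j) * a) ^ j) \<and>
            W a b = c * (\<Prod>j=1..N-1. d j))"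

definition wfun :: "nat \<Rightarrow> (complex \<Rightarrow> complex \<Rightarrow> complex) \<Rightarrow> complex \<Rightarrow> complex \<Rightarrow> int \<Rightarrow> complex" where
  "wfun N W a b n = W a b * (\<Prod>j=1..nat (n mod int N). b / (1 - omega N ^ j * a))"

text \<open>lambda(a,b) = r / w(a,b|0) * sum_{k=0}^{N-1} 1 / w(b,a|k), where r is the chosen
  value of (a/b)^((N-1)/2).\<close>
definition lam :: "nat \<Rightarrow> (complex \<Rightarrow> complex \<Rightarrow> complex) \<Rightarrow> complex \<Rightarrow> complex \<Rightarrow> complex \<Rightarrow> complex" where
  "lam N W r a b = r / W a b * (\<Sum>k=0..N-1. 1 / wfun N W b a (int k))"

end

theory Submission imports Defs "HOL-Computational_Algebra.Polynomial" begin

lemma om_pow: "omega N ^ k = cis (2 * pi * real k / real N)"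
  by (simp add: omega_def DeMoivre mult_ac)

lemma om_nz[simp]: "omega N \<noteq> 0"
  by (simp add: omega_def)

lemma om_N: "N > 0 \<Longrightarrow> omega N ^ N = 1"
  by (simp add: om_pow complex_eq_iff)

lemma om_inj: assumes "N > 0" "k < N" "l < N" "omega N ^ k = omega N ^ l" shows "k = l"
  using bij_betw_roots_unity[OF assms(1)] assms(2-4) unfolding bij_betw_def inj_on_def om_pow
  by auto

lemma om_powi: assumes "N > 0" shows "omega N powi k = omega N ^ nat (k mod int N)"
proof -
  have "k = int N * (k div int N) + k mod int N" by simp
  hence "omega N powi k = omega N powi (int N * (k div int N)) * omega N powi (k mod int N)"
    by (metis om_nz power_int_add)
  also have "omega N powi (int N * (k div int N)) = 1"
    by (simp add: power_int_mult power_int_of_nat om_N assms)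
  also have "omega N powi (k mod int N) = omega N ^ nat (k mod int N)"
    using assms by (metis int_nat_eq power_int_of_nat pos_mod_sign of_nat_0_less_iff)
  finally show ?thesis by simp
qed

lemma orth: assumes "N > 0" "k < N" "l < N"
  shows "(\<Sum>n<N. omega N ^ (n*k) / omega N ^ (n*l)) = (if k = l then of_nat N else 0)"
proof (cases "k = l")
  case True then show ?thesis by simp
next
  case False
  define z where "z = omega N ^ k / omega N ^ l"
  have z1: "z \<noteq> 1" using om_inj[OF assms] False by (auto simp: z_def)
  have zN: "z ^ N = 1" unfolding z_def
    by (simp add: power_divide power_mult[symmetric] mult.commute[of _ N] power_mult om_N assms)
  have "(\<Sum>n<N. omega N ^ (n*k) / omega N ^ (n*l)) = (\<Sum>n<N. z ^ n)"
    by (simp add: z_def power_divide power_mult[symmetric] mult.commute)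
  also have "\<dots> = 0" using geometric_sum[OF z1] zN by simp
  finally show ?thesis using False by simp
qed

lemma prod_id: assumes "N > 0"
  shows "(\<Prod>j<N. 1 - omega N ^ j * u) = 1 - u ^ N"
proof -
  define p where "p = (\<Prod>j<N. [:1, - (omega N ^ j):])"
  define q :: "complex poly" where "q = [:1:] - monom 1 N"
  have pe: "poly p u = (\<Prod>j<N. 1 - omega N ^ j * u)" for u
    by (simp add: p_def poly_prod mult.commute)
  have qe: "poly q u = 1 - u ^ N" for u by (simp add: q_def poly_monom)
  have dp: "degree p \<le> N"
  proof -
    have "degree p \<le> (\<Sum>j<N. degree [:1, - (omega N ^ j):])"
      unfolding p_def using degree_prod_sum_le[of "{..<N}" "\<lambda>j. [:1, - (omega N ^ j):]"] by (simp add: o_def)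
    also have "\<dots> \<le> (\<Sum>j<N. 1)" by (intro sum_mono) auto
    finally show ?thesis by simp
  qed
  have dq: "degree q \<le> N" unfolding q_def
    by (metis degree_diff_le degree_monom_le degree_pCons_0 le0)
  define A where "A = insert 0 {z::complex. z ^ N = 1}"
  have fin: "finite {z::complex. z ^ N = 1}" using assms by (intro finite_roots_unity) auto
  have cA: "card A = Suc N" unfolding A_def using fin assms
    by (subst card_insert_disjoint) (auto simp: card_roots_unity_eq power_0_left)
  have "p = q"
  proof (rule poly_eqI_degree[of A])
    fix z assume "z \<in> A"
    then consider "z = 0" | "z ^ N = 1" unfolding A_def by auto
    then show "poly p z = poly q z"
    proof cases
      case 1 then show ?thesis using assms by (simp add: pe qe)
    next
      case 2
      then obtain k where k: "k < N" "z = cis (2 * pi * real k / real N)"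
        using bij_betw_roots_unity[OF assms] unfolding bij_betw_def by auto
      hence zk: "z = omega N ^ k" by (simp add: om_pow)
      define j where "j = (N - k) mod N"
      have jN: "j < N" using assms by (simp add: j_def)
      have "omega N ^ j * z = omega N ^ (j + k)" by (simp add: zk power_add)
      also have "j + k = N \<or> j + k = 0"
      proof (cases "k = 0")
        case True then show ?thesis by (simp add: j_def)
      next
        case False
        hence "N - k < N" using k by simp
        hence "j = N - k" unfolding j_def by simp
        then show ?thesis using k by simp
      qed
      hence "omega N ^ (j + k) = 1" using om_N[OF assms] by auto
      finally have "(\<Prod>j<N. 1 - omega N ^ j * z) = 0"
        using jN by (intro prod_zero) auto
      then show ?thesis using 2 by (simp add: pe qe)
    qed
  qed (use cA dp dq in auto)
  thus ?thesis using pe qe by metis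
qed


lemma rec_w:
  assumes N: "N > 0" and cur: "u ^ N + v ^ N = 1" and nz: "\<forall>j::nat. 1 - omega N ^ j * u \<noteq> 0"
  shows "wfun N W u v k * (1 - omega N powi k * u) = v * wfun N W u v (k - 1)"
proof -
  define r where "r = k mod int N"
  have r0: "0 \<le> r" "r < int N" using N by (auto simp: r_def)
  have pk: "omega N powi k = omega N ^ nat r" using om_powi[OF N] by (simp add: r_def)
  define f where "f j = v / (1 - omega N ^ j * u)" for j
  show ?thesis
  proof (cases "r > 0")
    case True
    define m where "m = nat (r - 1)"
    have rm: "nat r = Suc m" using True by (simp add: m_def)
    have "(k - 1) mod int N = (r - 1) mod int N" by (simp add: r_def mod_diff_left_eq)
    also have "\<dots> = r - 1" using True r0 by (intro mod_pos_pos_trivial) auto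
    finally have km: "(k - 1) mod int N = r - 1" .
    have e1: "wfun N W u v k = W u v * (prod f {1..m} * f (Suc m))"
      unfolding wfun_def r_def[symmetric] rm f_def by (simp add: prod.cl_ivl_Suc)
    have e2: "wfun N W u v (k - 1) = W u v * prod f {1..m}"
      unfolding wfun_def km f_def m_def by simp
    have "f (Suc m) * (1 - omega N ^ Suc m * u) = v" using nz[rule_format, of "Suc m"] by (simp add: f_def)
    moreover have "wfun N W u v k * (1 - omega N powi k * u) = W u v * prod f {1..m} * (f (Suc m) * (1 - omega N ^ Suc m * u))"
      using e1 pk rm by simp
    ultimately show ?thesis using e2 by simp
  next
    case False
    hence r00: "r = 0" using r0 by simp
    obtain M where M: "N = Suc M" using N by (cases N) auto
    have "(k - 1) mod int N = (r - 1) mod int N" by (simp add: r_def mod_diff_left_eq)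
    also have "\<dots> = (int M + (-1) * int N) mod int N" using r00 M by simp
    also have "\<dots> = int M mod int N" by (rule mod_mult_self1)
    also have "\<dots> = int M" using M by simp
    finally have km: "(k - 1) mod int N = int M" .
    have e1: "wfun N W u v k = W u v" unfolding wfun_def r_def[symmetric] r00 by simp
    have e2: "wfun N W u v (k - 1) = W u v * prod f {1..M}"
      unfolding wfun_def km f_def by simp
    define P where "P = (\<Prod>j\<in>{1..M}. 1 - omega N ^ j * u)"
    have Pnz: "P \<noteq> 0" using nz by (simp add: P_def)
    have pf: "prod f {1..M} = v ^ M / P" by (simp add: f_def prod_dividef P_def)
    have "{..<N} = insert 0 {1..M}" using M by auto
    hence "(\<Prod>j<N. 1 - omega N ^ j * u) = (1 - u) * P" by (simp add: P_def)
    moreover have "v ^ N = 1 - u ^ N" using cur by (simp add: eq_diff_eq add.commute)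
    ultimately have "(1 - u) * P = v ^ N" using prod_id[OF N, of u] by simp
    hence "(1 - u) = v * (v ^ M / P)" using Pnz M by (simp add: field_simps)
    then show ?thesis using e1 e2 pk r00 pf by simp
  qed
qed


lemma shift_sum:
  assumes N: "N > 0" and per: "\<And>j. g (j + int N) = g j"
  shows "(\<Sum>k<N. g (int k - 1)) = (\<Sum>k<N. g (int k))"
proof -
  obtain M where M: "N = Suc M" using N by (cases N) auto
  have A: "(\<Sum>k<N. g (int k - 1)) = g (-1) + (\<Sum>k<M. g (int k))"
    unfolding M by (subst sum.lessThan_Suc_shift) simp
  have B: "g (-1) = g (int M)" using per[of "-1"] M by simp
  have C: "(\<Sum>k<N. g (int k)) = (\<Sum>k<M. g (int k)) + g (int M)"
    unfolding M by simp
  show ?thesis using A B C by (simp add: add.commute)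
qed

lemma wfun_per: "wfun N W u v (j + int N) = wfun N W u v j"
  by (simp add: wfun_def)

lemma om_per: assumes "N > 0" shows "omega N powi (m * (j + int N)) = omega N powi (m * j)"
proof -
  have "(m * (j + int N)) mod int N = (m * j) mod int N"
    by (simp add: distrib_left mod_add_right_eq[symmetric])
  thus ?thesis by (simp add: om_powi[OF assms])
qed

lemma twist_shift:
  assumes N: "N > 0" and per: "\<And>j. h (j + int N) = h j"
  shows "(\<Sum>k<N. omega N powi (m * int k) * h (int k - 1))
       = omega N powi m * (\<Sum>k<N. omega N powi (m * int k) * h (int k))"
proof -
  have "(\<Sum>k<N. omega N powi (m * int k) * h (int k - 1))
      = (\<Sum>k<N. omega N powi m * (omega N powi (m * (int k - 1)) * h (int k - 1)))"
  proof (intro sum.cong refl)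
    fix k
    have "m * int k = m + m * (int k - 1)" by (simp add: algebra_simps)
    hence "omega N powi (m * int k) = omega N powi m * omega N powi (m * (int k - 1))"
      by (simp add: power_int_add)
    thus "omega N powi (m * int k) * h (int k - 1) = omega N powi m * (omega N powi (m * (int k - 1)) * h (int k - 1))"
      by simp
  qed
  also have "\<dots> = omega N powi m * (\<Sum>k<N. omega N powi (m * (int k - 1)) * h (int k - 1))"
    by (simp add: sum_distrib_left)
  also have "(\<Sum>k<N. omega N powi (m * (int k - 1)) * h (int k - 1)) = (\<Sum>k<N. omega N powi (m * int k) * h (int k))"
    using shift_sum[OF N, of "\<lambda>j. omega N powi (m * j) * h j"] per om_per[OF N] by simp
  finally show ?thesis .
qed

lemma pfrac:
  assumes N: "N > 0" and nz: "\<forall>j::nat. 1 - omega N ^ j * y \<noteq> 0" and yN: "1 - y ^ N \<noteq> 0"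
  shows "(\<Sum>n<N. omega N ^ n / (1 - omega N ^ n * y)) = of_nat N * y ^ (N - 1) / (1 - y ^ N)"
proof -
  have t: "omega N ^ n / (1 - omega N ^ n * y) = (\<Sum>m<N. y ^ m * omega N ^ (n * Suc m)) / (1 - y ^ N)" for n
  proof -
    define z where "z = omega N ^ n * y"
    have z1: "z \<noteq> 1" using nz[rule_format, of n] by (auto simp: z_def)
    have zN: "z ^ N = y ^ N" by (simp add: z_def power_mult_distrib power_mult[symmetric] mult.commute[of n] power_mult om_N N)
    have "(\<Sum>m<N. z ^ m) = (1 - y ^ N) / (1 - z)"
      using geometric_sum[OF z1, of N] zN z1 by (simp add: field_simps)
    hence "1 / (1 - z) = (\<Sum>m<N. z ^ m) / (1 - y ^ N)" using yN z1 by (simp add: field_simps)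
    hence "omega N ^ n / (1 - z) = omega N ^ n * (\<Sum>m<N. z ^ m) / (1 - y ^ N)"
      by (metis times_divide_eq_right mult.right_neutral)
    also have "omega N ^ n * (\<Sum>m<N. z ^ m) = (\<Sum>m<N. y ^ m * omega N ^ (n * Suc m))"
      by (simp add: sum_distrib_left z_def power_mult_distrib power_mult[symmetric] power_add[symmetric] algebra_simps)
    finally show ?thesis by (simp add: z_def)
  qed
  have "(\<Sum>n<N. omega N ^ n / (1 - omega N ^ n * y)) = (\<Sum>n<N. \<Sum>m<N. y ^ m * omega N ^ (n * Suc m)) / (1 - y ^ N)"
    by (simp add: t sum_divide_distrib)
  also have "(\<Sum>n<N. \<Sum>m<N. y ^ m * omega N ^ (n * Suc m)) = (\<Sum>m<N. y ^ m * (\<Sum>n<N. omega N ^ (n * Suc m)))"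
    by (subst sum.swap) (simp add: sum_distrib_left)
  also have "\<dots> = (\<Sum>m<N. if m = N - 1 then y ^ m * of_nat N else 0)"
  proof (intro sum.cong refl)
    fix m assume m: "m \<in> {..<N}"
    show "y ^ m * (\<Sum>n<N. omega N ^ (n * Suc m)) = (if m = N - 1 then y ^ m * of_nat N else 0)"
    proof (cases "m = N - 1")
      case True
      hence "Suc m = N" using m by auto
      hence h1: "omega N ^ (n * Suc m) = 1" for n by (simp add: power_mult[symmetric] mult.commute[of n] power_mult om_N N)
      have h2: "(\<Sum>n<N. omega N ^ (n * Suc m)) = of_nat N" by (simp only: h1) simp
      show ?thesis by (subst h2) (simp add: True)
    next
      case False
      hence "Suc m < N" using m by auto
      hence "(\<Sum>n<N. omega N ^ (n * Suc m) / omega N ^ (n * 0)) = 0" using orth[OF N, of "Suc m" 0] N by simp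
      then show ?thesis using False by simp
    qed
  qed
  also have "\<dots> = y ^ (N - 1) * of_nat N" using N by (simp add: sum.delta)
  finally show ?thesis by (simp add: mult.commute)
qed


lemma fa1: "(bm::complex) \<noteq> 0 \<Longrightarrow> C / bm * (w * (x * bm / D) * E / b) = C * E / b * x * (w / D)"
  by (simp add: field_simps)

lemma fa2: "(n::complex) \<noteq> 0 \<Longrightarrow> b \<noteq> 0 \<Longrightarrow> x \<noteq> 0 \<Longrightarrow> n * n = K / b * x * (n * Y / (x * xm)) \<Longrightarrow> n * b * xm = K * Y"
  by (cases "xm = 0") (auto simp: field_simps)

lemma fa3: "(b0::complex) \<noteq> 0 \<Longrightarrow> bm \<noteq> 0 \<Longrightarrow> E \<noteq> 0 \<Longrightarrow> t \<noteq> 0 \<Longrightarrow> 1 / t = s \<Longrightarrow>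
   n * b0 * s ^ 2 / E / bm = n * (s / (t / b0 * E)) * (1 / bm)"
  by (simp add: field_simps power2_eq_square)

lemma fa4: "(ym::complex) \<noteq> 0 \<Longrightarrow> n * b * xm = K * ym \<Longrightarrow> K = n * b * (xm / ym)"
  by (simp add: field_simps)

lemma fa5: "(s::complex) * t = 1 \<Longrightarrow> 1 / t = s"
  by (metis mult.commute nonzero_mult_div_cancel_right zero_neq_one mult_zero_right)

lemma wfun0: "wfun N W u v 0 = W u v"
  by (simp add: wfun_def)

theorem mainTheorem4:
  fixes N :: nat and x y s t :: complex and W :: "complex \<Rightarrow> complex \<Rightarrow> complex"
  assumes N2: "N \<ge> 2"
    and curve: "x ^ N + y ^ N = 1"
    and x0: "x \<noteq> 0" and y0: "y \<noteq> 0"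
    and nzx: "\<forall>j::nat. 1 - omega N ^ j * x \<noteq> 0"
    and nzy: "\<forall>j::nat. 1 - omega N ^ j * y \<noteq> 0"
    and branchx: "\<forall>n::int. is_w0 N W (omega N powi n * x) y"
    and branchy: "\<forall>n::int. is_w0 N W (omega N powi n * y) x"
    and shiftx: "\<forall>n::int. wfun N W x y n = W (omega N powi n * x) y"
    and shifty: "\<forall>n::int. wfun N W y x n = W (omega N powi n * y) x"
    and s_sq: "s ^ 2 = (x / y) ^ (N - 1)"
    and t_sq: "t ^ 2 = (y / x) ^ (N - 1)"
    and st: "s * t = 1"
    and wxy0: "\<forall>n::int. wfun N W x y n \<noteq> 0"
    and wyx0: "\<forall>n::int. wfun N W y x n \<noteq> 0"
    and lam0: "lam N W t y x \<noteq> 0"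
  shows "\<forall>n::int. (\<Sum>k=0..N-1. wfun N W x y (int k) * omega N powi (n * int k))
           = of_nat N * (s / lam N W t y x) * (1 / wfun N W y x (n - 1))"
proof -
  have N: "N > 0" using N2 by simp
  have ivl: "{0..N-1} = {..<N}" using N by auto
  define \<omega> where "\<omega> = omega N"
  define a where "a = wfun N W x y"
  define b where "b = wfun N W y x"
  have a0: "a k \<noteq> 0" for k using wxy0 by (simp add: a_def)
  have b0: "b k \<noteq> 0" for k using wyx0 by (simp add: b_def)
  have aper: "a (j + int N) = a j" for j by (simp add: a_def wfun_per)
  have bper: "b (j + int N) = b j" for j by (simp add: b_def wfun_per)
  have recA: "a k * (1 - \<omega> powi k * x) = y * a (k - 1)" for k
    unfolding a_def \<omega>_def by (rule rec_w[OF N curve nzx])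
  have curve': "y ^ N + x ^ N = 1" using curve by (simp add: add.commute)
  have recB: "b k * (1 - \<omega> powi k * y) = x * b (k - 1)" for k
    unfolding b_def \<omega>_def by (rule rec_w[OF N curve' nzy])
  have nzy': "1 - \<omega> powi k * y \<noteq> 0" for k using nzy om_powi[OF N] by (simp add: \<omega>_def)
  define F where "F n = (\<Sum>k<N. a (int k) * \<omega> powi (n * int k))" for n
  define E where "E m = (\<Sum>k<N. \<omega> powi (m * int k) * (1 / a (int k)))" for m
  have tw: "(\<Sum>k<N. \<omega> powi (m * int k) * h (int k - 1)) = \<omega> powi m * (\<Sum>k<N. \<omega> powi (m * int k) * h (int k))"
    if "\<And>j. h (j + int N) = h j" for m h
    unfolding \<omega>_def by (rule twist_shift[of N h m, OF N that])
  have \<omega>nz: "\<omega> \<noteq> 0" by (simp add: \<omega>_def)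
  have powk: "\<omega> powi ((n + 1) * int k) = \<omega> powi (n * int k) * \<omega> powi (int k)" for n k
    using \<omega>nz by (simp add: distrib_right power_int_add)
  have Fstep: "x * F (n + 1) = (1 - \<omega> powi n * y) * F n" for n
  proof -
    have "x * F (n + 1) = (\<Sum>k<N. \<omega> powi (n * int k) * (a (int k) * (\<omega> powi (int k) * x)))"
      unfolding F_def sum_distrib_left by (intro sum.cong refl) (simp only: powk, simp add: algebra_simps)
    also have "\<dots> = (\<Sum>k<N. \<omega> powi (n * int k) * a (int k) - y * (\<omega> powi (n * int k) * a (int k - 1)))"
    proof (intro sum.cong refl)
      fix k
      have hk: "a (int k) * (\<omega> powi (int k) * x) = a (int k) - y * a (int k - 1)"
        using recA[of "int k"] by (simp add: algebra_simps)
      show "\<omega> powi (n * int k) * (a (int k) * (\<omega> powi (int k) * x)) =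
            \<omega> powi (n * int k) * a (int k) - y * (\<omega> powi (n * int k) * a (int k - 1))"
        unfolding hk by (simp add: algebra_simps)
    qed
    also have "\<dots> = F n - y * (\<Sum>k<N. \<omega> powi (n * int k) * a (int k - 1))"
      unfolding F_def by (simp add: sum_subtractf sum_distrib_left mult.commute)
    also have "(\<Sum>k<N. \<omega> powi (n * int k) * a (int k - 1)) = \<omega> powi n * F n"
      unfolding F_def using tw[of a n] aper by (simp add: mult.commute)
    finally show ?thesis by (simp add: algebra_simps)
  qed
  have Estep: "x * \<omega> powi (m + 1) * E (m + 1) = (\<omega> powi m - y) * E m" for m
  proof -
    define ia where "ia j = 1 / a j" for j
    have iaper: "ia (j + int N) = ia j" for j by (simp add: ia_def aper)
    have r: "y * ia k = ia (k - 1) - \<omega> powi k * x * ia (k - 1)" for k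
    proof -
      have "y * a (k - 1) = a k * (1 - \<omega> powi k * x)" using recA[of k] by simp
      thus ?thesis using a0[of k] a0[of "k-1"] by (simp add: ia_def field_simps)
    qed
    have "y * E m = (\<Sum>k<N. \<omega> powi (m * int k) * ia (int k - 1)) - x * (\<Sum>k<N. \<omega> powi ((m + 1) * int k) * ia (int k - 1))"
    proof -
      have "y * E m = (\<Sum>k<N. \<omega> powi (m * int k) * (y * ia (int k)))"
        unfolding E_def ia_def by (simp add: sum_distrib_left algebra_simps)
      also have "\<dots> = (\<Sum>k<N. \<omega> powi (m * int k) * ia (int k - 1) - x * (\<omega> powi ((m + 1) * int k) * ia (int k - 1)))"
        by (intro sum.cong refl) (simp only: r powk, simp add: algebra_simps)
      also have "\<dots> = (\<Sum>k<N. \<omega> powi (m * int k) * ia (int k - 1)) - x * (\<Sum>k<N. \<omega> powi ((m + 1) * int k) * ia (int k - 1))"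
        by (simp add: sum_subtractf sum_distrib_left)
      finally show ?thesis .
    qed
    also have "\<dots> = \<omega> powi m * E m - x * (\<omega> powi (m + 1) * E (m + 1))"
      unfolding E_def ia_def[symmetric] using tw[of ia, OF iaper] by simp
    finally show ?thesis by (simp add: algebra_simps)
  qed
  have Fb1: "F (n + 1) * b n = F n * b (n - 1)" for n
  proof -
    have "x * (F (n + 1) * b n) = x * (F n * b (n - 1))"
      using Fstep[of n] recB[of n] by (metis mult.assoc mult.commute)
    thus ?thesis using x0 by simp
  qed
  define C where "C = F 0 * b (-1)"
  have Fb: "F n * b (n - 1) = C" for n
  proof (induction n rule: int_induct[where k = 0])
    case base show ?case by (simp add: C_def)
  next
    case (step1 i) then show ?case using Fb1[of i] by simp
  next
    case (step2 i) then show ?case using Fb1[of "i - 1"] by simp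
  qed
  have Eb: "E (- int n) * b 0 = \<omega> ^ n * b (int n) * E 0" for n
  proof (induction n)
    case 0 then show ?case by simp
  next
    case (Suc n)
    define D where "D = 1 - \<omega> ^ Suc n * y"
    have Dnz: "D \<noteq> 0" unfolding D_def \<omega>_def using nzy by blast
    have e1: "x * \<omega> powi (- int n) * E (- int n) = (\<omega> powi (- int n - 1) - y) * E (- int n - 1)"
      using Estep[of "- int n - 1"] by simp
    have i1: "\<omega> ^ Suc n * \<omega> powi (- int n) = \<omega>" using \<omega>nz by (simp add: power_int_minus)
    have i2: "\<omega> ^ Suc n * \<omega> powi (- int n - 1) = 1"
    proof -
      have "- int n - 1 = - int (Suc n)" by simp
      thus ?thesis using \<omega>nz by (simp only: power_int_minus power_int_of_nat) (simp add: field_simps)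
    qed
    have e2: "x * \<omega> * E (- int n) = D * E (- int (Suc n))"
    proof -
      have "\<omega> ^ Suc n * (x * \<omega> powi (- int n) * E (- int n)) = \<omega> ^ Suc n * ((\<omega> powi (- int n - 1) - y) * E (- int n - 1))"
        using e1 by simp
      hence "x * (\<omega> ^ Suc n * \<omega> powi (- int n)) * E (- int n) = (\<omega> ^ Suc n * \<omega> powi (- int n - 1) - \<omega> ^ Suc n * y) * E (- int n - 1)"
        by (simp add: algebra_simps)
      moreover have sn: "- int (Suc n) = - int n - 1" by simp
      ultimately show ?thesis unfolding i1 i2 D_def sn by simp
    qed
    have e3: "b (int (Suc n)) * D = x * b (int n)"
    proof -
      have "b (int (Suc n)) * (1 - \<omega> powi int (Suc n) * y) = x * b (int (Suc n) - 1)" by (rule recB)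
      thus ?thesis unfolding power_int_of_nat D_def by simp
    qed
    have "D * (E (- int (Suc n)) * b 0) = x * \<omega> * (E (- int n) * b 0)" by (metis e2 mult.assoc)
    also have "\<dots> = x * \<omega> * (\<omega> ^ n * b (int n) * E 0)" using Suc by simp
    also have "\<dots> = D * (\<omega> ^ Suc n * b (int (Suc n)) * E 0)" using e3 by (simp add: algebra_simps)
    finally show ?case using Dnz by simp
  qed
  have Fn: "F (int n) = (\<Sum>k<N. a (int k) * \<omega> ^ (n * k))" for n
    unfolding F_def by (simp add: power_int_of_nat[symmetric])
  have En: "E (- int n) = (\<Sum>l<N. (1 / \<omega> ^ (n * l)) * (1 / a (int l)))" for n
    unfolding E_def by (simp add: power_int_minus power_int_of_nat[symmetric] divide_inverse)
  have pars: "(\<Sum>n<N. F (int n) * E (- int n)) = of_nat N * of_nat N"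
  proof -
    have "(\<Sum>n<N. F (int n) * E (- int n)) = (\<Sum>n<N. \<Sum>k<N. \<Sum>l<N. (a (int k) / a (int l)) * (\<omega> ^ (n * k) / \<omega> ^ (n * l)))"
      by (simp add: Fn En sum_product ac_simps)
    also have "\<dots> = (\<Sum>k<N. \<Sum>n<N. \<Sum>l<N. (a (int k) / a (int l)) * (\<omega> ^ (n * k) / \<omega> ^ (n * l)))"
      by (rule sum.swap)
    also have "\<dots> = (\<Sum>k<N. \<Sum>l<N. \<Sum>n<N. (a (int k) / a (int l)) * (\<omega> ^ (n * k) / \<omega> ^ (n * l)))"
      by (intro sum.cong refl sum.swap)
    also have "\<dots> = (\<Sum>k<N. \<Sum>l<N. (a (int k) / a (int l)) * (\<Sum>n<N. \<omega> ^ (n * k) / \<omega> ^ (n * l)))"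
      by (simp only: sum_distrib_left)
    also have "\<dots> = (\<Sum>k<N. \<Sum>l<N. (a (int k) / a (int l)) * (if k = l then of_nat N else 0))"
      unfolding \<omega>_def by (intro sum.cong refl) (simp add: orth[OF N])
    also have "\<dots> = (\<Sum>k<N. \<Sum>l<N. (if l = k then of_nat N else 0))"
    proof (intro sum.cong refl)
      fix k l
      show "(a (int k) / a (int l)) * (if k = l then of_nat N else 0) = (if l = k then of_nat N else (0::complex))"
        using a0[of "int k"] by auto
    qed
    also have "\<dots> = (\<Sum>k<N. of_nat N)" by simp
    finally show ?thesis by simp
  qed
  have trm: "F (int n) * E (- int n) = C * E 0 / b 0 * x * (\<omega> ^ n / (1 - \<omega> ^ n * y))" for n
  proof -
    define D where "D = 1 - \<omega> ^ n * y"
    have Dnz: "D \<noteq> 0" using nzy'[of "int n"] by (simp add: D_def power_int_of_nat)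
    have f1: "F (int n) = C / b (int n - 1)" using Fb[of "int n"] b0[of "int n - 1"] by (simp add: eq_divide_eq)
    have f2: "E (- int n) = \<omega> ^ n * b (int n) * E 0 / b 0" using Eb[of n] b0[of 0] by (simp add: eq_divide_eq)
    have f3: "b (int n) = x * b (int n - 1) / D"
      using recB[of "int n"] Dnz unfolding power_int_of_nat D_def[symmetric] by (simp add: eq_divide_eq)
    have "F (int n) * E (- int n) = C / b (int n - 1) * (\<omega> ^ n * (x * b (int n - 1) / D) * E 0 / b 0)"
      unfolding f1 f2 f3 ..
    also have "\<dots> = C * E 0 / b 0 * x * (\<omega> ^ n / D)" using b0[of "int n - 1"] by (rule fa1)
    finally show ?thesis unfolding D_def .
  qed
  have yN: "1 - y ^ N = x ^ N" using curve by (simp add: algebra_simps)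
  have yN0: "1 - y ^ N \<noteq> 0" using yN x0 by simp
  have "of_nat N * of_nat N = C * E 0 / b 0 * x * (of_nat N * y ^ (N - 1) / (1 - y ^ N))"
  proof -
    have "of_nat N * of_nat N = C * E 0 / b 0 * x * (\<Sum>n<N. \<omega> ^ n / (1 - \<omega> ^ n * y))"
      using pars by (simp only: trm sum_distrib_left)
    also have "(\<Sum>n<N. \<omega> ^ n / (1 - \<omega> ^ n * y)) = of_nat N * y ^ (N - 1) / (1 - y ^ N)"
      unfolding \<omega>_def by (rule pfrac[OF N nzy yN0])
    finally show ?thesis .
  qed
  hence CE: "C * E 0 = of_nat N * b 0 * (x / y) ^ (N - 1)"
  proof -
    assume h: "of_nat N * of_nat N = C * E 0 / b 0 * x * (of_nat N * y ^ (N - 1) / (1 - y ^ N))"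
    have xN: "1 - y ^ N = x * x ^ (N - 1)"
    proof -
      obtain M where M: "N = Suc M" using N by (cases N) auto
      show ?thesis using yN unfolding M by simp
    qed
    have NN: "(of_nat N :: complex) \<noteq> 0" using N by simp
    have "of_nat N * b 0 * x ^ (N - 1) = C * E 0 * y ^ (N - 1)"
      by (rule fa2[OF NN b0[of 0] x0 h[unfolded xN]])
    hence "C * E 0 = of_nat N * b 0 * (x ^ (N - 1) / y ^ (N - 1))" using y0 by (intro fa4) auto
    thus ?thesis by (simp only: power_divide)
  qed
  have lamE: "lam N W t y x = t / b 0 * E 0"
    unfolding lam_def E_def b_def a_def ivl by (simp add: wfun0)
  show ?thesis
  proof
    fix n :: int
    have lhs: "(\<Sum>k=0..N-1. wfun N W x y (int k) * omega N powi (n * int k)) = F n"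
      unfolding F_def ivl a_def \<omega>_def ..
    have Fn': "F n = C / b (n - 1)" using Fb[of n] b0[of "n - 1"] by (simp add: eq_divide_eq)
    have E0: "E 0 \<noteq> 0" using lam0 lamE by auto
    have t0: "t \<noteq> 0" using st by auto
    have C1: "C = of_nat N * b 0 * s ^ 2 / E 0" using CE E0 s_sq by (simp add: eq_divide_eq)
    have it: "1 / t = s" using st by (rule fa5)
    show "(\<Sum>k=0..N-1. wfun N W x y (int k) * omega N powi (n * int k))
           = of_nat N * (s / lam N W t y x) * (1 / wfun N W y x (n - 1))"
      unfolding lhs Fn' lamE b_def[symmetric] C1 using b0[of 0] b0[of "n - 1"] E0 t0 it by (rule fa3)
  qed
qed

end
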